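(* Let $\mathbb{Z} = \langle g\rangle$ act freely and cospecially on a CAT(0) cube complex $X$ by combinatorial isometries. Then the set of vertices $x\in X^{(0)}$ for which $d(x,gx)$ is minimal spans a nonempty $\langle g\rangle$-invariant convex subcomplex of $X$ (called the combinatorial minset $\mathrm{Min}(g)$).
   Context: $d$ is the combinatorial metric on the vertex set of $X$ (path metric on the 1-skeleton). An action is cospecial if the quotient cube complex is special in the sense of Haglund–Wise (hyperplanes two-sided, no self-intersection, direct self-osculation or inter-osculation). *)

theory Defs
  imports Main
begin

text \<open>The vertex set X^(0) is the whole type 'v; adjacency (1-cells) is E.\<close>

definition walk :: "('v \<Rightarrow> 'v \<Rightarrow> bool) \<Rightarrow> 'v \<Rightarrow> 'v \<Rightarrow> nat \<Rightarrow> bool" where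
  "walk E x y n \<longleftrightarrow> (\<exists>p::nat \<Rightarrow> 'v. p 0 = x \<and> p n = y \<and> (\<forall>i<n. E (p i) (p (Suc i))))"

definition gdist :: "('v \<Rightarrow> 'v \<Rightarrow> bool) \<Rightarrow> 'v \<Rightarrow> 'v \<Rightarrow> nat" where
  "gdist E x y = (LEAST n. walk E x y n)"

definition simple_graph :: "('v \<Rightarrow> 'v \<Rightarrow> bool) \<Rightarrow> bool" where
  "simple_graph E \<longleftrightarrow> (\<forall>x y. E x y \<longrightarrow> E y x) \<and> (\<forall>x. \<not> E x x)"

definition connected_graph :: "('v \<Rightarrow> 'v \<Rightarrow> bool) \<Rightarrow> bool" where
  "connected_graph E \<longleftrightarrow> (\<forall>x y. \<exists>n. walk E x y n)"

text \<open>Median graphs = 1-skeleta of CAT(0) cube complexes (Chepoi, Roller, Gerasimov);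
  the CAT(0) cube complex is recovered as the cube completion of the graph.\<close>
definition median_graph :: "('v \<Rightarrow> 'v \<Rightarrow> bool) \<Rightarrow> bool" where
  "median_graph E \<longleftrightarrow> simple_graph E \<and> connected_graph E \<and>
     (\<forall>x y z. \<exists>!m. gdist E x m + gdist E m y = gdist E x y
                  \<and> gdist E y m + gdist E m z = gdist E y z
                  \<and> gdist E x m + gdist E m z = gdist E x z)"

abbreviation CAT0_cube_complex :: "('v \<Rightarrow> 'v \<Rightarrow> bool) \<Rightarrow> bool" where
  "CAT0_cube_complex E \<equiv> median_graph E"

text \<open>A k-cube of the complex: an embedding of the vertex set of the standard k-cube
  (subsets of {..<k}) with adjacency exactly along the cube edges.\<close>
definition is_cube :: "('v \<Rightarrow> 'v \<Rightarrow> bool) \<Rightarrow> nat \<Rightarrow> (nat set \<Rightarrow> 'v) \<Rightarrow> bool" where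
  "is_cube E k f \<longleftrightarrow> inj_on f (Pow {..<k}) \<and>
     (\<forall>A\<in>Pow {..<k}. \<forall>B\<in>Pow {..<k}. E (f A) (f B) \<longleftrightarrow> card ((A - B) \<union> (B - A)) = 1)"

definition zpow :: "('v \<Rightarrow> 'v) \<Rightarrow> int \<Rightarrow> 'v \<Rightarrow> 'v" where
  "zpow g n = (if 0 \<le> n then g ^^ nat n else (inv g) ^^ nat (- n))"

definition comb_isometry :: "('v \<Rightarrow> 'v \<Rightarrow> bool) \<Rightarrow> ('v \<Rightarrow> 'v) \<Rightarrow> bool" where
  "comb_isometry E g \<longleftrightarrow> bij g \<and> (\<forall>x y. E x y \<longleftrightarrow> E (g x) (g y))"

text \<open>Free action on the cube complex: no nontrivial element fixes a point, equivalently
  (barycentres) no nontrivial element stabilises a cube.\<close>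
definition free_action :: "('v \<Rightarrow> 'v \<Rightarrow> bool) \<Rightarrow> ('v \<Rightarrow> 'v) \<Rightarrow> bool" where
  "free_action E g \<longleftrightarrow> (\<forall>n::int. n \<noteq> 0 \<longrightarrow>
      (\<forall>k f. is_cube E k f \<longrightarrow> zpow g n ` (f ` Pow {..<k}) \<noteq> f ` Pow {..<k}))"

definition sq :: "('v \<Rightarrow> 'v \<Rightarrow> bool) \<Rightarrow> 'v \<Rightarrow> 'v \<Rightarrow> 'v \<Rightarrow> 'v \<Rightarrow> bool" where
  "sq E a b c d \<longleftrightarrow> E a b \<and> E a c \<and> E b d \<and> E c d \<and> a \<noteq> d \<and> b \<noteq> c"

definition elem_par :: "('v \<Rightarrow> 'v \<Rightarrow> bool) \<Rightarrow> 'v \<times> 'v \<Rightarrow> 'v \<times> 'v \<Rightarrow> bool" where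
  "elem_par E e f \<longleftrightarrow> sq E (fst e) (snd e) (fst f) (snd f)"

text \<open>Oriented edges dual to the same hyperplane, with the same orientation.\<close>
definition opar :: "('v \<Rightarrow> 'v \<Rightarrow> bool) \<Rightarrow> 'v \<times> 'v \<Rightarrow> 'v \<times> 'v \<Rightarrow> bool" where
  "opar E = (elem_par E)\<^sup>*\<^sup>*"

text \<open>Edges dual to the same hyperplane.\<close>
definition hyp_eq :: "('v \<Rightarrow> 'v \<Rightarrow> bool) \<Rightarrow> 'v \<times> 'v \<Rightarrow> 'v \<times> 'v \<Rightarrow> bool" where
  "hyp_eq E e f \<longleftrightarrow> opar E e f \<or> opar E e (snd f, fst f)"

definition gmap :: "('v \<Rightarrow> 'v) \<Rightarrow> 'v \<times> 'v \<Rightarrow> 'v \<times> 'v" where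
  "gmap h e = (h (fst e), h (snd e))"

text \<open>The quotient X/<g> is special (Haglund--Wise), expressed via lifts to X:
  hyperplanes of the quotient are <g>-orbits of hyperplanes of X.\<close>
definition cospecial :: "('v \<Rightarrow> 'v \<Rightarrow> bool) \<Rightarrow> ('v \<Rightarrow> 'v) \<Rightarrow> bool" where
  "cospecial E g \<longleftrightarrow>
    \<comment> \<open>two-sided\<close>
    (\<forall>n a b. E a b \<longrightarrow> \<not> opar E (gmap (zpow g n) (a, b)) (b, a)) \<and>
    \<comment> \<open>no self-intersection\<close>
    (\<forall>n a b c d. sq E a b c d \<longrightarrow> \<not> hyp_eq E (a, c) (gmap (zpow g n) (a, b))) \<and>
    \<comment> \<open>no direct self-osculation\<close>
    (\<forall>n a b c. E a b \<and> E a c \<and> b \<noteq> c \<and> opar E (a, c) (gmap (zpow g n) (a, b))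
        \<longrightarrow> (\<exists>d. sq E a b c d)) \<and>
    \<comment> \<open>no inter-osculation\<close>
    (\<forall>n m a b c d p q r. sq E a b c d \<and> E p q \<and> E p r \<and> q \<noteq> r
        \<and> hyp_eq E (p, q) (gmap (zpow g n) (a, b)) \<and> hyp_eq E (p, r) (gmap (zpow g m) (a, c))
        \<longrightarrow> (\<exists>s. sq E p q r s))"

definition comb_minset :: "('v \<Rightarrow> 'v \<Rightarrow> bool) \<Rightarrow> ('v \<Rightarrow> 'v) \<Rightarrow> 'v set" where
  "comb_minset E g = {x. \<forall>y. gdist E x (g x) \<le> gdist E y (g y)}"

text \<open>A vertex set spans a convex subcomplex iff it is combinatorially (geodesically) convex
  in the 1-skeleton.\<close>
definition spans_convex_subcomplex :: "('v \<Rightarrow> 'v \<Rightarrow> bool) \<Rightarrow> 'v set \<Rightarrow> bool" where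
  "spans_convex_subcomplex E S \<longleftrightarrow>
     (\<forall>x\<in>S. \<forall>y\<in>S. \<forall>z. gdist E x z + gdist E z y = gdist E x y \<longrightarrow> z \<in> S)"

end

theory Submission
  imports Defs
begin

locale mg = fixes E :: "'v \<Rightarrow> 'v \<Rightarrow> bool" assumes mgE: "median_graph E"
begin

abbreviation d where "d \<equiv> gdist E"

lemma symE: "E x y \<Longrightarrow> E y x" using mgE unfolding median_graph_def simple_graph_def by blast
lemma irrE: "\<not> E x x" using mgE unfolding median_graph_def simple_graph_def by blast
lemma conn: "\<exists>n. walk E x y n" using mgE unfolding median_graph_def connected_graph_def by blast
lemma median: "\<exists>m. d x m + d m y = d x y \<and> d y m + d m z = d y z \<and> d x m + d m z = d x z"
  using mgE unfolding median_graph_def by blast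
lemma median_uniq: "d x m + d m y = d x y \<and> d y m + d m z = d y z \<and> d x m + d m z = d x z
  \<Longrightarrow> d x m' + d m' y = d x y \<and> d y m' + d m' z = d y z \<and> d x m' + d m' z = d x z \<Longrightarrow> m = m'"
  using mgE unfolding median_graph_def by blast

lemma walk0: "walk E x y 0 \<longleftrightarrow> x = y" unfolding walk_def by auto

lemma walkSuc: "walk E x y (Suc n) \<longleftrightarrow> (\<exists>z. E x z \<and> walk E z y n)"
proof
  assume "walk E x y (Suc n)"
  then obtain p where p: "p 0 = x" "p (Suc n) = y" "\<forall>i<Suc n. E (p i) (p (Suc i))"
    unfolding walk_def by blast
  show "\<exists>z. E x z \<and> walk E z y n"
    apply (rule exI[of _ "p 1"]) unfolding walk_def using p
    by (auto intro!: exI[of _ "\<lambda>i. p (Suc i)"])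
next
  assume "\<exists>z. E x z \<and> walk E z y n"
  then obtain z p where h: "E x z" "p 0 = z" "p n = y" "\<forall>i<n. E (p i) (p (Suc i))"
    unfolding walk_def by blast
  show "walk E x y (Suc n)" unfolding walk_def
  proof (intro exI[of _ "\<lambda>i. case i of 0 \<Rightarrow> x | Suc j \<Rightarrow> p j"] conjI allI impI)
    fix i assume "i < Suc n"
    then show "E (case i of 0 \<Rightarrow> x | Suc j \<Rightarrow> p j) (case Suc i of 0 \<Rightarrow> x | Suc j \<Rightarrow> p j)"
      using h by (cases i) auto
  qed (use h in auto)
qed

lemma walk_app: "walk E x y m \<Longrightarrow> walk E y z n \<Longrightarrow> walk E x z (m+n)"
  by (induction m arbitrary: x) (auto simp: walk0 walkSuc)

lemma walk1: "E x y \<Longrightarrow> walk E x y 1"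
  by (simp add: walkSuc walk0)

lemma walk_rev: "walk E x y n \<Longrightarrow> walk E y x n"
proof (induction n arbitrary: x)
  case 0 then show ?case by (simp add: walk0)
next
  case (Suc n)
  then obtain z where "E x z" "walk E z y n" by (auto simp: walkSuc)
  then have "walk E y z n" "walk E z x 1" using Suc symE walk1 by auto
  then show ?case using walk_app by fastforce
qed

lemma walk_d: "walk E x y (d x y)" using conn[of x y] unfolding gdist_def by (rule LeastI_ex)
lemma d_le: "walk E x y n \<Longrightarrow> d x y \<le> n" unfolding gdist_def by (rule Least_le)
lemma d_tri: "d x z \<le> d x y + d y z"
  using walk_app[OF walk_d[of x y] walk_d[of y z]] d_le by blast
lemma d_sym: "d x y = d y x"
  using d_le[OF walk_rev[OF walk_d[of x y]]] d_le[OF walk_rev[OF walk_d[of y x]]] by simp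
lemma d0[simp]: "d x x = 0" using d_le[of x x 0] by (simp add: walk0)
lemma d0_iff[simp]: "d x y = 0 \<longleftrightarrow> x = y"
  using walk_d[of x y] by (auto simp: walk0)
lemma dE: "E x y \<Longrightarrow> d x y = 1"
  using d_le[OF walk1, of x y] irrE[of x] by (cases "d x y") auto
lemma d1E: "d x y = 1 \<Longrightarrow> E x y"
  using walk_d[of x y] by (auto simp: walkSuc walk0)
lemma step: "d x y = Suc n \<Longrightarrow> \<exists>z. E x z \<and> d z y = n"
proof -
  assume a: "d x y = Suc n"
  then obtain z where z: "E x z" "walk E z y n" using walk_d[of x y] by (auto simp: walkSuc)
  have "d z y \<le> n" using d_le z by blast
  moreover have "d x y \<le> d x z + d z y" by (rule d_tri)
  ultimately show ?thesis using z dE a by force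
qed

lemma bip: "E a b \<Longrightarrow> d z b = d z a + 1 \<or> d z a = d z b + 1"
proof -
  assume ab: "E a b"
  obtain m where m: "d a m + d m b = d a b" "d b m + d m z = d b z" "d a m + d m z = d a z"
    using median[of a b z] by blast
  have "d a b = 1" using dE ab .
  then consider "d a m = 0" | "d m b = 0" using m(1) by linarith
  then show ?thesis
  proof cases
    case 1 then have "m = a" by simp
    then show ?thesis using m(2) \<open>d a b = 1\<close> d_sym[of b a] d_sym[of z a] d_sym[of z b] by simp
  next
    case 2 then have "m = b" by simp
    then show ?thesis using m(3) \<open>d a b = 1\<close> d_sym[of z a] d_sym[of z b] by simp
  qed
qed


lemma arith4: "(x::nat) < y \<Longrightarrow> q < p \<Longrightarrow> (y = x+1 \<or> x = y+1) \<Longrightarrow> (q = p+1 \<or> p = q+1)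
  \<Longrightarrow> (p = x+1 \<or> x = p+1) \<Longrightarrow> (q = y+1 \<or> y = q+1) \<Longrightarrow> x = q \<and> y = x + 1 \<and> p = x + 1"
  by auto

definition W :: "'v \<Rightarrow> 'v \<Rightarrow> 'v set" where "W a b = {w. d w a < d w b}"

lemma Wc: "E a b \<Longrightarrow> w \<notin> W a b \<longleftrightarrow> w \<in> W b a"
  using bip[of a b w] unfolding W_def by auto

lemma WcS: "E a b \<Longrightarrow> - W a b = W b a"
  using Wc by blast

lemma dist2: "E a b \<Longrightarrow> E a c \<Longrightarrow> b \<noteq> c \<Longrightarrow> d b c = 2"
proof -
  assume h: "E a b" "E a c" "b \<noteq> c"
  have "d b c \<le> d b a + d a c" by (rule d_tri)
  moreover have "d b a = 1" "d a c = 1" using h dE symE by auto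
  moreover have "d b c \<noteq> 0" using h by simp
  moreover have "d b c = d b a + 1 \<or> d b a = d b c + 1" using bip[OF h(2), of b] .
  ultimately show ?thesis by linarith
qed

lemma sq_sub: "sq E a b c e \<Longrightarrow> w \<in> W a b \<Longrightarrow> w \<in> W c e"
proof (rule ccontr)
  assume s: "sq E a b c e" and w: "w \<in> W a b" and n: "w \<notin> W c e"
  have E: "E a b" "E a c" "E b e" "E c e" "a \<noteq> e" "b \<noteq> c" using s unfolding sq_def by auto
  have 1: "d w a < d w b" using w unfolding W_def by simp
  have 2: "d w e < d w c" using n Wc[OF E(4)] unfolding W_def by simp
  have b1: "d w b = d w a + 1 \<or> d w a = d w b + 1" using bip[OF E(1)] .
  have b2: "d w c = d w a + 1 \<or> d w a = d w c + 1" using bip[OF E(2)] .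
  have b3: "d w e = d w b + 1 \<or> d w b = d w e + 1" using bip[OF E(3)] .
  have b4: "d w e = d w c + 1 \<or> d w c = d w e + 1" using bip[OF E(4)] .
  have wc: "d w c = d w a + 1" and we: "d w e = d w a" using 1 2 b1 b2 b3 b4 by linarith+
  have bc: "d b c = 2" using dist2[OF E(1) E(2) E(6)] .
  have bc': "d b e + d e c = 2" using dE[OF E(3)] dE[OF E(4)] d_sym[of e c] by simp
  have P1: "d b a + d a c = d b c \<and> d c a + d a w = d c w \<and> d b a + d a w = d b w"
    using dE[OF E(1)] dE[OF E(2)] d_sym[of b a] d_sym[of c a] d_sym[of a w] d_sym[of c w] d_sym[of b w] bc wc 1 b1
    by simp
  have P2: "d b e + d e c = d b c \<and> d c e + d e w = d c w \<and> d b e + d e w = d b w"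
    using dE[OF E(3)] dE[OF E(4)] d_sym[of e c] d_sym[of e w] d_sym[of c w] d_sym[of b w] bc wc we 1 b1
    by simp
  have "a = e" using median_uniq[OF P1 P2] .
  then show False using E(5) by simp
qed

lemma sq_sym1: "sq E a b c e \<Longrightarrow> sq E c e a b" unfolding sq_def using symE by blast
lemma sq_sym2: "sq E a b c e \<Longrightarrow> sq E b a e c" unfolding sq_def using symE by blast

lemma sq_eq: "sq E a b c e \<Longrightarrow> W a b = W c e"
proof -
  assume s: "sq E a b c e"
  have E: "E a b" "E c e" using s unfolding sq_def by auto
  have "W a b \<subseteq> W c e" using sq_sub[OF s] by blast
  moreover have "W b a \<subseteq> W e c" using sq_sub[OF sq_sym2[OF s]] by blast
  ultimately show ?thesis using WcS[OF E(1)] WcS[OF E(2)] by blast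
qed

lemma opar_W: "opar E e f \<Longrightarrow> W (fst e) (snd e) = W (fst f) (snd f)"
  unfolding opar_def
proof (induction rule: rtranclp_induct)
  case base then show ?case by simp
next
  case (step y z) then show ?case using sq_eq unfolding elem_par_def by simp
qed

lemma ladder: "\<forall>a b c e. E a b \<longrightarrow> E c e \<longrightarrow> d a c = k \<longrightarrow> d b e = k \<longrightarrow> d a e = k+1 \<longrightarrow> d b c = k+1
   \<longrightarrow> opar E (a,b) (c,e)"
proof (induction k)
  case 0 then show ?case unfolding opar_def by auto
next
  case (Suc k)
  show ?case
  proof (intro allI impI)
    fix a b c e assume h: "E a b" "E c e" "d a c = Suc k" "d b e = Suc k" "d a e = Suc k + 1" "d b c = Suc k + 1"
    obtain a' where a': "E a a'" "d a' c = k" using step[OF h(3)] by blast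
    have a'b: "a' \<noteq> b" using a' h by auto
    have "d a' b = d a' a + 1 \<or> d a' a = d a' b + 1" using bip[OF h(1)] .
    then have da'b: "d a' b = 2" using dE[OF a'(1)] d_sym[of a' a] a'b by auto
    have "d a' e \<le> d a' c + d c e" "d a e \<le> d a a' + d a' e" using d_tri by blast+
    then have da'e: "d a' e = Suc k" using dE[OF h(2)] dE[OF a'(1)] a' h by simp
    obtain m where m: "d a' m + d m b = d a' b" "d b m + d m e = d b e" "d a' m + d m e = d a' e"
      using median[of a' b e] by blast
    have "m \<noteq> a'"
    proof
      assume "m = a'" then show False using m(2) da'b h(4) da'e d_sym[of b a'] by simp
    qed
    moreover have "m \<noteq> b"
    proof
      assume "m = b" then show False using m(3) da'b h(4) da'e by simp
    qed
    ultimately have "d a' m \<noteq> 0" "d m b \<noteq> 0" by simp_all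
    then have m1: "d a' m = 1" "d m b = 1" using m(1) da'b by linarith+
    have Ea'm: "E a' m" and Ebm: "E b m" using d1E m1 d_sym[of m b] by auto
    have dme: "d m e = k" using m(2) m1 d_sym[of b m] h(4) by simp
    have "m \<noteq> a"
    proof
      assume "m = a" then show False using m(3) m1 h(5) da'e by simp
    qed
    then have sq: "sq E a b a' m" unfolding sq_def using h a' Ea'm Ebm a'b by auto
    have "d m c \<le> d m e + d e c" "d b c \<le> d b m + d m c" using d_tri by blast+
    then have dmc: "d m c = k + 1" using dme dE[OF h(2)] d_sym[of e c] dE[OF Ebm] h(6) by simp
    have "opar E (a', m) (c, e)" using Suc.IH Ea'm h(2) a'(2) dme da'e dmc by simp
    moreover have "elem_par E (a,b) (a',m)" unfolding elem_par_def using sq by simp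
    ultimately show "opar E (a,b) (c,e)" unfolding opar_def
      by (meson converse_rtranclp_into_rtranclp)
  qed
qed

lemma cross_W: "E u v \<Longrightarrow> E a b \<Longrightarrow> u \<in> W a b \<Longrightarrow> v \<notin> W a b \<Longrightarrow> W u v = W a b"
proof -
  assume h: "E u v" "E a b" "u \<in> W a b" "v \<notin> W a b"
  have 1: "d u a < d u b" using h(3) unfolding W_def by simp
  have 2: "d v b < d v a" using h(4) Wc[OF h(2)] unfolding W_def by simp
  have b1: "d u b = d u a + 1 \<or> d u a = d u b + 1" using bip[OF h(2)] .
  have b2: "d v b = d v a + 1 \<or> d v a = d v b + 1" using bip[OF h(2)] .
  have b3: "d v a = d u a + 1 \<or> d u a = d v a + 1" using bip[OF h(1), of a] d_sym[of a v] d_sym[of a u] by simp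
  have b4: "d v b = d u b + 1 \<or> d u b = d v b + 1" using bip[OF h(1), of b] d_sym[of b v] d_sym[of b u] by simp
  have s: "d a v = d v a" "d a u = d u a" "d b v = d v b" "d b u = d u b" by (rule d_sym)+
  have "d u a = d v b \<and> d u b = d u a + 1 \<and> d v a = d u a + 1" using arith4[OF 1 2 b1 b2 b3 b4] .
  then have dd: "d a u = d b v" "d a v = d a u + 1" "d b u = d a u + 1" using s by linarith+
  have "opar E (a,b) (u,v)" using ladder[rule_format, OF h(2) h(1) refl dd(1)[symmetric] dd(2) dd(3)] .
  from opar_W[OF this] show ?thesis by simp
qed

lemma W_opar: "E a b \<Longrightarrow> E c e \<Longrightarrow> W a b = W c e \<Longrightarrow> opar E (a,b) (c,e)"
proof -
  assume h: "E a b" "E c e" "W a b = W c e"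
  have "c \<in> W c e" "e \<notin> W c e" using dE[OF h(2)] unfolding W_def by auto
  have "c \<in> W a b" "e \<in> W b a" using \<open>c \<in> W c e\<close> \<open>e \<notin> W c e\<close> h(3) Wc[OF h(1)] by auto
  then have 1: "d c a < d c b" and 2: "d e b < d e a" unfolding W_def by auto
  have b1: "d c b = d c a + 1 \<or> d c a = d c b + 1" using bip[OF h(1)] .
  have b2: "d e b = d e a + 1 \<or> d e a = d e b + 1" using bip[OF h(1)] .
  have b3: "d e a = d c a + 1 \<or> d c a = d e a + 1" using bip[OF h(2), of a] d_sym[of a e] d_sym[of a c] by simp
  have b4: "d e b = d c b + 1 \<or> d c b = d e b + 1" using bip[OF h(2), of b] d_sym[of b e] d_sym[of b c] by simp
  have s: "d a e = d e a" "d a c = d c a" "d b e = d e b" "d b c = d c b" by (rule d_sym)+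
  have "d c a = d e b \<and> d c b = d c a + 1 \<and> d e a = d c a + 1" using arith4[OF 1 2 b1 b2 b3 b4] .
  then have dd: "d a c = d b e" "d a e = d a c + 1" "d b c = d a c + 1" using s by linarith+
  show ?thesis using ladder[rule_format, OF h(1) h(2) refl dd(1)[symmetric] dd(2) dd(3)] .
qed

lemma conv_step: "d x z = Suc n \<Longrightarrow> d x z + d z y = d x y \<Longrightarrow> \<exists>x'. E x x' \<and> d x' z = n \<and> d x' y + 1 = d x y"
proof -
  assume h: "d x z = Suc n" "d x z + d z y = d x y"
  obtain x' where x': "E x x'" "d x' z = n" using step[OF h(1)] by blast
  have "d x' y \<le> d x' z + d z y" "d x y \<le> d x x' + d x' y" using d_tri by blast+
  then show ?thesis using x' h dE[OF x'(1)] by (intro exI[of _ x']) auto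
qed

lemma convex: "E a b \<Longrightarrow> w1 \<in> W a b \<Longrightarrow> w2 \<in> W a b \<Longrightarrow> d w1 z + d z w2 = d w1 w2 \<Longrightarrow> z \<in> W a b"
proof (induction "d w1 z" arbitrary: w1)
  case 0 then show ?case by simp
next
  case (Suc n)
  obtain x' where x': "E w1 x'" "d x' z = n" "d x' w2 + 1 = d w1 w2"
    using conv_step[OF Suc(2)[symmetric] Suc(6)] by blast
  have bt: "d x' z + d z w2 = d x' w2" using x' Suc(2,6) by simp
  show ?case
  proof (cases "x' \<in> W a b")
    case True show ?thesis by (rule Suc(1)[OF x'(2)[symmetric] Suc(3) True Suc(5) bt])
  next
    case False
    then have "W w1 x' = W a b" using cross_W[OF x'(1) Suc(3) Suc(4)] by simp
    then have "w2 \<in> W w1 x'" using Suc(5) by simp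
    then have "d w2 w1 < d w2 x'" unfolding W_def by simp
    then show ?thesis using x'(3) d_sym[of w2 w1] d_sym[of w2 x'] by simp
  qed
qed

lemma convex_c: "E a b \<Longrightarrow> w1 \<notin> W a b \<Longrightarrow> w2 \<notin> W a b \<Longrightarrow> d w1 z + d z w2 = d w1 w2 \<Longrightarrow> z \<notin> W a b"
  using convex[of b a w1 w2 z] Wc[of a b] symE by blast

lemma BT: "E a b \<Longrightarrow> v \<in> W a b \<Longrightarrow> u \<notin> W a b \<Longrightarrow> w \<notin> W a b \<Longrightarrow> d u w + 2 \<le> d u v + d v w"
proof -
  assume h: "E a b" "v \<in> W a b" "u \<notin> W a b" "w \<notin> W a b"
  obtain m where m: "d u m + d m v = d u v" "d v m + d m w = d v w" "d u m + d m w = d u w"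
    using median[of u v w] by blast
  have "m \<notin> W a b" using convex_c[OF h(1) h(3) h(4) m(3)] .
  then have "m \<noteq> v" using h(2) by auto
  then have "d m v \<noteq> 0" by simp
  then have "d m v \<ge> 1" by linarith
  then show ?thesis using m d_sym[of v m] by linarith
qed

lemma CR: "E a b \<Longrightarrow> E c e \<Longrightarrow> q \<notin> W a b \<Longrightarrow> q \<in> W c e \<Longrightarrow> p \<in> W a b \<Longrightarrow> p \<notin> W c e
  \<Longrightarrow> x \<in> W a b \<Longrightarrow> x \<in> W c e \<Longrightarrow> y \<notin> W a b \<Longrightarrow> y \<notin> W c e \<Longrightarrow>
  \<exists>x0 x1 x2 s. sq E x0 x1 x2 s \<and> x0 \<in> W a b \<and> x0 \<in> W c e \<and> x1 \<notin> W a b \<and> x1 \<in> W c e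
     \<and> x2 \<in> W a b \<and> x2 \<notin> W c e"
proof (induction "d x y" arbitrary: x rule: less_induct)
  case less
  note h = less.prems
  obtain m1 where m1: "d x m1 + d m1 y = d x y" "d y m1 + d m1 q = d y q" "d x m1 + d m1 q = d x q"
    using median[of x y q] by blast
  have m1a: "m1 \<notin> W a b" using convex_c[OF h(1) h(9) h(3) m1(2)] .
  have m1c: "m1 \<in> W c e" using convex[OF h(2) h(8) h(4) m1(3)] .
  have "m1 \<noteq> x" using m1a h(7) by auto
  then obtain n1 where n1: "d x m1 = Suc n1" using not0_implies_Suc by (metis d0_iff)
  obtain x1 where x1: "E x x1" "d x1 m1 = n1" "d x1 y + 1 = d x y"
    using conv_step[OF n1 m1(1)] by blast
  have x1c: "x1 \<in> W c e" using convex[OF h(2) h(8) m1c, of x1] dE[OF x1(1)] x1(2) n1 by simp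
  obtain m2 where m2: "d x m2 + d m2 y = d x y" "d y m2 + d m2 p = d y p" "d x m2 + d m2 p = d x p"
    using median[of x y p] by blast
  have m2a: "m2 \<in> W a b" using convex[OF h(1) h(7) h(5) m2(3)] .
  have m2c: "m2 \<notin> W c e" using convex_c[OF h(2) h(10) h(6) m2(2)] .
  have "m2 \<noteq> x" using m2c h(8) by auto
  then obtain n2 where n2: "d x m2 = Suc n2" using not0_implies_Suc by (metis d0_iff)
  obtain x2 where x2: "E x x2" "d x2 m2 = n2" "d x2 y + 1 = d x y"
    using conv_step[OF n2 m2(1)] by blast
  have x2a: "x2 \<in> W a b" using convex[OF h(1) h(7) m2a, of x2] dE[OF x2(1)] x2(2) n2 by simp
  show ?case
  proof (cases "x1 \<in> W a b")
    case True
    have "d x1 y < d x y" using x1 by simp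
    then show ?thesis using less.hyps[of x1] h True x1c by blast
  next
    case x1a: False
    show ?thesis
    proof (cases "x2 \<in> W c e")
      case True
      have "d x2 y < d x y" using x2 by simp
      then show ?thesis using less.hyps[of x2] h True x2a by blast
    next
      case x2c: False
      obtain s where s: "d x1 s + d s x2 = d x1 x2" "d x2 s + d s y = d x2 y" "d x1 s + d s y = d x1 y"
        using median[of x1 x2 y] by blast
      have sa: "s \<notin> W a b" using convex_c[OF h(1) x1a h(9) s(3)] .
      have sc: "s \<notin> W c e" using convex_c[OF h(2) x2c h(10) s(2)] .
      have x12: "x1 \<noteq> x2" using x1a x2a by auto
      have "d x1 x2 = 2" using dist2[OF x1(1) x2(1) x12] .
      moreover have "s \<noteq> x1" "s \<noteq> x2" using sc x1c sa x2a by auto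
      ultimately have "d x1 s \<noteq> 0" "d s x2 \<noteq> 0" "d x1 s + d s x2 = 2" using s(1) by auto
      then have "d x1 s = 1" "d s x2 = 1" by linarith+
      then have "E x1 s" "E x2 s" using d1E symE by blast+
      moreover have "s \<noteq> x" using sa h(7) by auto
      ultimately have "sq E x x1 x2 s" unfolding sq_def using x1(1) x2(1) x12 by auto
      then show ?thesis using h(7,8) x1a x1c x2a x2c by blast
    qed
  qed
qed

end

locale act = mg E for E :: "'v \<Rightarrow> 'v \<Rightarrow> bool" +
  fixes g :: "'v \<Rightarrow> 'v"
  assumes iso: "comb_isometry E g" and cosp: "cospecial E g"
begin

lemma gbij: "bij g" using iso unfolding comb_isometry_def by blast
lemma gE: "E x y \<longleftrightarrow> E (g x) (g y)" using iso unfolding comb_isometry_def by blast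
lemma g_inv[simp]: "g (inv g x) = x" using gbij by (simp add: bij_is_surj surj_f_inv_f)
lemma inv_g[simp]: "inv g (g x) = x" using gbij by (simp add: bij_is_inj inv_f_f)
lemma gE': "E x y \<Longrightarrow> E (g x) (g y)" using gE by blast
lemma giE: "E x y \<Longrightarrow> E (inv g x) (inv g y)" using gE[of "inv g x" "inv g y"] by simp

lemma walk_g: "walk E x y n \<Longrightarrow> walk E (g x) (g y) n"
proof -
  assume "walk E x y n"
  then obtain p where p: "p 0 = x" "p n = y" "\<forall>i<n. E (p i) (p (Suc i))" unfolding walk_def by blast
  show ?thesis unfolding walk_def
    by (rule exI[of _ "\<lambda>i. g (p i)"]) (use p gE' in auto)
qed

lemma walk_gi: "walk E (g x) (g y) n \<Longrightarrow> walk E x y n"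
proof -
  assume "walk E (g x) (g y) n"
  then obtain p where p: "p 0 = g x" "p n = g y" "\<forall>i<n. E (p i) (p (Suc i))" unfolding walk_def by blast
  show ?thesis unfolding walk_def
    by (rule exI[of _ "\<lambda>i. inv g (p i)"]) (use p giE in auto)
qed

lemma dg[simp]: "d (g x) (g y) = d x y"
proof -
  have "(\<lambda>n. walk E (g x) (g y) n) = (\<lambda>n. walk E x y n)" using walk_g walk_gi by blast
  then show ?thesis unfolding gdist_def by simp
qed

lemma dgi[simp]: "d (inv g x) (inv g y) = d x y"
  using dg[of "inv g x" "inv g y"] by simp

lemma Wg: "w \<in> W (g a) (g b) \<longleftrightarrow> inv g w \<in> W a b"
  using dg[of "inv g w" a] dg[of "inv g w" b] unfolding W_def by simp

lemma Wg2: "g w \<in> W (g a) (g b) \<longleftrightarrow> w \<in> W a b"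
  unfolding W_def by simp

lemma Wi: "w \<in> W (inv g a) (inv g b) \<longleftrightarrow> g w \<in> W a b"
  using dg[of w "inv g a"] dg[of w "inv g b"] unfolding W_def by simp

lemma zpow1: "zpow g 1 = g" unfolding zpow_def by simp

lemma C1: "E a b \<Longrightarrow> \<not> opar E (g a, g b) (b, a)"
  using cosp unfolding cospecial_def gmap_def by (metis zpow1 fst_conv snd_conv)

lemma C2: "sq E a b c e \<Longrightarrow> \<not> hyp_eq E (a, c) (g a, g b)"
  using cosp unfolding cospecial_def gmap_def by (metis zpow1 fst_conv snd_conv)

lemma C3: "E a b \<Longrightarrow> E a c \<Longrightarrow> b \<noteq> c \<Longrightarrow> opar E (a,c) (g a, g b) \<Longrightarrow> \<exists>e. sq E a b c e"
  using cosp unfolding cospecial_def gmap_def by (metis zpow1 fst_conv snd_conv)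

lemma NoCross: "E a b \<Longrightarrow> x1 \<in> W a b \<Longrightarrow> x1 \<in> W (g a) (g b) \<Longrightarrow> x2 \<notin> W a b \<Longrightarrow> x2 \<notin> W (g a) (g b)
  \<Longrightarrow> x3 \<in> W a b \<Longrightarrow> x3 \<notin> W (g a) (g b) \<Longrightarrow> x4 \<notin> W a b \<Longrightarrow> x4 \<in> W (g a) (g b) \<Longrightarrow> False"
proof -
  assume h: "E a b" "x1 \<in> W a b" "x1 \<in> W (g a) (g b)" "x2 \<notin> W a b" "x2 \<notin> W (g a) (g b)"
    "x3 \<in> W a b" "x3 \<notin> W (g a) (g b)" "x4 \<notin> W a b" "x4 \<in> W (g a) (g b)"
  have Eg: "E (g a) (g b)" using gE' h(1) .
  obtain y0 y1 y2 s where sq: "sq E y0 y1 y2 s" and y: "y0 \<in> W a b" "y0 \<in> W (g a) (g b)" "y1 \<notin> W a b"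
     "y1 \<in> W (g a) (g b)" "y2 \<in> W a b" "y2 \<notin> W (g a) (g b)"
    using CR[OF h(1) Eg h(8) h(9) h(6) h(7) h(2) h(3) h(4) h(5)] by blast
  have E: "E y0 y1" "E y0 y2" using sq unfolding sq_def by auto
  have 1: "W y0 y1 = W a b" using cross_W[OF E(1) h(1) y(1) y(3)] .
  have 2: "W y0 y2 = W (g a) (g b)" using cross_W[OF E(2) Eg y(2) y(6)] .
  have "W (g y0) (g y1) = W (g a) (g b)"
  proof
    show "W (g y0) (g y1) \<subseteq> W (g a) (g b)" using 1 Wg by blast
    show "W (g a) (g b) \<subseteq> W (g y0) (g y1)" using 1 Wg by blast
  qed
  then have "W y0 y2 = W (g y0) (g y1)" using 2 by simp
  then have "opar E (y0, y2) (g y0, g y1)" using W_opar[OF E(2) gE'[OF E(1)]] by simp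
  then have "hyp_eq E (y0, y2) (g y0, g y1)" unfolding hyp_eq_def by simp
  then show False using C2[OF sq] by simp
qed

lemma ND: "E a0 b0 \<Longrightarrow> x \<in> W a0 b0 \<Longrightarrow> y \<in> W (g a0) (g b0) \<Longrightarrow> W a0 b0 \<inter> W (g a0) (g b0) = {}
  \<Longrightarrow> W a0 b0 \<inter> W (g (g a0)) (g (g b0)) \<noteq> {} \<Longrightarrow> False"
proof (induction "d x y" arbitrary: a0 b0 x y rule: less_induct)
  case less
  note h = less.prems
  have IH: "\<And>a b x' y'. d x' y' < d x y \<Longrightarrow> E a b \<Longrightarrow> x' \<in> W a b \<Longrightarrow> y' \<in> W (g a) (g b)
     \<Longrightarrow> W a b \<inter> W (g a) (g b) = {} \<Longrightarrow> W a b \<inter> W (g (g a)) (g (g b)) \<noteq> {} \<Longrightarrow> False"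
    using less.hyps by blast
  have dis: "\<And>w. w \<in> W a0 b0 \<Longrightarrow> w \<notin> W (g a0) (g b0)" using h(4) by blast
  obtain e where e: "e \<in> W a0 b0" "e \<in> W (g (g a0)) (g (g b0))" using h(5) by blast
  have Eg: "E (g a0) (g b0)" using gE'[OF h(1)] .
  have cases: "d x y = 0 \<or> d x y = 1 \<or> d x y = 2 \<or> (\<exists>n. d x y = Suc (Suc (Suc n)))" by presburger
  moreover
  { assume "d x y = 0"
    then have "x = y" by simp
    then have False using dis h(2) h(3) by blast }
  moreover
  { assume d1: "d x y = 1"
    have Exy: "E x y" using d1E[OF d1] .
    have yj: "y \<notin> W a0 b0" using dis h(3) by blast
    have xg: "x \<notin> W (g a0) (g b0)" using dis h(2) by blast
    have 1: "W x y = W a0 b0" using cross_W[OF Exy h(1) h(2) yj] .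
    have 2: "W y x = W (g a0) (g b0)" using cross_W[OF symE[OF Exy] Eg h(3) xg] .
    have 3: "W (g x) (g y) = W y x"
    proof (rule set_eqI)
      fix w show "w \<in> W (g x) (g y) \<longleftrightarrow> w \<in> W y x" using Wg[of w x y] Wg[of w a0 b0] 1 2 by simp
    qed
    have "opar E (g x, g y) (y, x)" using W_opar[OF gE'[OF Exy] symE[OF Exy] 3] .
    then have False using C1[OF Exy] by simp }
  moreover
  { assume d2: "d x y = 2"
    obtain v where v: "E x v" "d v y = 1" using step[of x y 1] d2 by auto
    have Evy: "E v y" using d1E[OF v(2)] .
    have dxv: "d x v = 1" using dE[OF v(1)] .
    have vj: "v \<notin> W a0 b0"
    proof
      assume vj': "v \<in> W a0 b0"
      show False by (rule IH[OF _ h(1) vj' h(3) h(4) h(5)]) (use v(2) d2 in simp)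
    qed
    have vg: "v \<notin> W (g a0) (g b0)"
    proof
      assume vg': "v \<in> W (g a0) (g b0)"
      show False by (rule IH[OF _ h(1) h(2) vg' h(4) h(5)]) (use dxv d2 in simp)
    qed
    have xy: "x \<noteq> y" using dis h(2) h(3) by blast
    have Wxv: "W x v = W a0 b0" using cross_W[OF v(1) h(1) h(2) vj] .
    have Wyv: "W y v = W (g a0) (g b0)" using cross_W[OF symE[OF Evy] Eg h(3) vg] .
    have 3: "W v y = W (g v) (g x)"
    proof (rule set_eqI)
      fix w
      have "w \<in> W v y \<longleftrightarrow> w \<notin> W y v" using Wc[OF symE[OF Evy], of w] by simp
      also have "\<dots> \<longleftrightarrow> inv g w \<notin> W a0 b0" using Wyv Wg[of w a0 b0] by simp
      also have "\<dots> \<longleftrightarrow> inv g w \<notin> W x v" using Wxv by simp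
      also have "\<dots> \<longleftrightarrow> inv g w \<in> W v x" using Wc[OF v(1)] by simp
      also have "\<dots> \<longleftrightarrow> w \<in> W (g v) (g x)" using Wg[of w v x] by simp
      finally show "w \<in> W v y \<longleftrightarrow> w \<in> W (g v) (g x)" .
    qed
    have op: "opar E (v, y) (g v, g x)" using W_opar[OF Evy gE'[OF symE[OF v(1)]] 3] .
    obtain e' where sq: "sq E v x y e'" using C3[OF symE[OF v(1)] Evy xy op] by blast
    have "hyp_eq E (v, y) (g v, g x)" using op unfolding hyp_eq_def by simp
    then have False using C2[OF sq] by simp }
  moreover
  { fix n assume d3: "d x y = Suc (Suc (Suc n))"
    obtain u1 where u1: "E x u1" "d u1 y = Suc (Suc n)" using step[OF d3] by blast
    obtain u2 where u2: "E u1 u2" "d u2 y = Suc n" using step[OF u1(2)] by blast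
    have E21: "E u2 u1" using symE[OF u2(1)] .
    have "d x u2 \<le> d x u1 + d u1 u2" "d x y \<le> d x u2 + d u2 y" using d_tri by blast+
    then have dxu2: "d x u2 = 2" using dE[OF u1(1)] dE[OF u2(1)] d3 u2(2) by simp
    have u2L: "u2 \<in> W u2 u1" unfolding W_def using dE[OF E21] by simp
    have u1L: "u1 \<notin> W u2 u1" unfolding W_def using dE[OF u2(1)] by simp
    have xL: "x \<notin> W u2 u1" unfolding W_def using dxu2 dE[OF u1(1)] by simp
    have yL: "y \<in> W u2 u1" unfolding W_def using u1(2) u2(2) d_sym[of y u1] d_sym[of y u2] by simp
    have claimA: "\<And>p. p \<in> W a0 b0 \<Longrightarrow> p \<notin> W u2 u1"
    proof
      fix p assume pj: "p \<in> W a0 b0" and pL: "p \<in> W u2 u1"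
      obtain m where m: "d p m + d m x = d p x" "d x m + d m u2 = d x u2" "d p m + d m u2 = d p u2"
        using median[of p x u2] by blast
      have mj: "m \<in> W a0 b0" using convex[OF h(1) pj h(2) m(1)] .
      have mL: "m \<in> W u2 u1" using convex[OF E21 pL u2L m(3)] .
      have "m \<noteq> x" using mL xL by auto
      have u2j: "u2 \<notin> W a0 b0"
      proof
        assume u2j': "u2 \<in> W a0 b0"
        show False by (rule IH[OF _ h(1) u2j' h(3) h(4) h(5)]) (use u2(2) d3 in simp)
      qed
      have "m \<noteq> u2" using u2j mj by auto
      have "d x m \<noteq> 0" "d m u2 \<noteq> 0" using \<open>m \<noteq> x\<close> \<open>m \<noteq> u2\<close> by simp_all
      then have "d m u2 = 1" using m(2) dxu2 by linarith
      moreover have "d m y \<le> d m u2 + d u2 y" by (rule d_tri)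
      ultimately have "d m y < d x y" using u2(2) d3 by simp
      then show False using IH[OF _ h(1) mj h(3) h(4) h(5)] by simp
    qed
    have claimB: "\<And>p. p \<in> W (g a0) (g b0) \<Longrightarrow> p \<in> W u2 u1"
    proof (rule ccontr)
      fix p assume pg: "p \<in> W (g a0) (g b0)" and pL: "p \<notin> W u2 u1"
      obtain m where m: "d p m + d m y = d p y" "d y m + d m u1 = d y u1" "d p m + d m u1 = d p u1"
        using median[of p y u1] by blast
      have mg: "m \<in> W (g a0) (g b0)" using convex[OF Eg pg h(3) m(1)] .
      have mL: "m \<notin> W u2 u1" using convex_c[OF E21 pL u1L m(3)] .
      have "m \<noteq> y" using mL yL by auto
      then have "d y m \<noteq> 0" by simp
      then have "d m u1 \<le> Suc n" using m(2) u1(2) d_sym[of y u1] by linarith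
      moreover have "d x m \<le> d x u1 + d u1 m" by (rule d_tri)
      ultimately have "d x m < d x y" using dE[OF u1(1)] d3 d_sym[of u1 m] by simp
      then show False using IH[OF _ h(1) h(2) mg h(4) h(5)] by simp
    qed
    have jL': "\<And>p. p \<in> W a0 b0 \<Longrightarrow> p \<in> W u1 u2" using claimA Wc[OF E21] by blast
    have iy: "inv g y \<in> W a0 b0" using h(3) Wg by blast
    have ie: "inv g (inv g e) \<in> W a0 b0" using e(2) Wg by blast
    have ie1: "inv g e \<in> W (g a0) (g b0)" using e(2) Wg by blast
    have False
    proof (cases "W u1 u2 \<inter> W (g u1) (g u2) = {}")
      case True
      have "y \<in> W (g u1) (g u2)" using Wg jL'[OF iy] by blast
      moreover have "e \<in> W u1 u2 \<inter> W (g (g u1)) (g (g u2))"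
        using jL'[OF e(1)] jL'[OF ie] Wg by blast
      moreover have "u1 \<in> W u1 u2" unfolding W_def using dE[OF u2(1)] by simp
      moreover have "d u1 y < d x y" using u1(2) d3 by simp
      ultimately show False using IH[OF _ u2(1) _ _ True] by blast
    next
      case False
      then obtain r where r: "r \<in> W u1 u2" "r \<in> W (g u1) (g u2)" by blast
      have disL: "W u2 u1 \<inter> W (g u2) (g u1) = {}"
      proof (rule ccontr)
        assume "W u2 u1 \<inter> W (g u2) (g u1) \<noteq> {}"
        then obtain t where t: "t \<in> W u2 u1" "t \<in> W (g u2) (g u1)" by blast
        have r1: "r \<notin> W u2 u1" using r(1) Wc[OF u2(1)] by blast
        have r2: "r \<notin> W (g u2) (g u1)" using r(2) Wc[OF gE'[OF u2(1)]] by blast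
        have y2: "y \<notin> W (g u2) (g u1)" using Wg[of y u2 u1] claimA[OF iy] by simp
        have e1: "e \<notin> W u2 u1" using claimA[OF e(1)] .
        have e2: "e \<in> W (g u2) (g u1)" using Wg[of e u2 u1] claimB[OF ie1] by simp
        show False using NoCross[OF E21 t r1 r2 claimB[OF h(3)] y2 e1 e2] .
      qed
      have Ei: "E (inv g u2) (inv g u1)" using giE[OF E21] .
      have xi: "x \<in> W (inv g u2) (inv g u1)" using Wi claimB Wg2 h(2) by blast
      have u2i: "u2 \<in> W (g (inv g u2)) (g (inv g u1))" using u2L by simp
      have disi: "W (inv g u2) (inv g u1) \<inter> W (g (inv g u2)) (g (inv g u1)) = {}"
      proof (rule ccontr)
        assume "W (inv g u2) (inv g u1) \<inter> W (g (inv g u2)) (g (inv g u1)) \<noteq> {}"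
        then obtain w where w: "w \<in> W (inv g u2) (inv g u1)" "w \<in> W u2 u1" by auto
        have "g w \<in> W u2 u1" using w(1) Wi by blast
        moreover have "g w \<in> W (g u2) (g u1)" using w(2) Wg2 by blast
        ultimately show False using disL by blast
      qed
      have nei: "e \<in> W (inv g u2) (inv g u1) \<inter> W (g (g (inv g u2))) (g (g (inv g u1)))"
        using Wi[of e u2 u1] claimB Wg2 e(1) Wg[of e u2 u1] claimB[OF ie1] by auto
      have "d x u2 < d x y" using dxu2 d3 by simp
      then show False using IH[OF _ Ei xi u2i disi] nei by blast
    qed }
  ultimately show False by blast
qed

abbreviation Min where "Min \<equiv> comb_minset E g"

lemma minD: "x \<in> Min \<Longrightarrow> d x (g x) \<le> d w (g w)" unfolding comb_minset_def by blast

lemma minI: "x \<in> Min \<Longrightarrow> d z (g z) \<le> d x (g x) \<Longrightarrow> z \<in> Min"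
  unfolding comb_minset_def using le_trans by blast

lemma min_inv: "y \<in> Min \<Longrightarrow> inv g y \<in> Min"
proof -
  assume y: "y \<in> Min"
  have "d (inv g y) (g (inv g y)) = d y (g y)" using dg[of "inv g y" y] by simp
  then show ?thesis using minI[OF y] by simp
qed

lemma L1: "E a b \<Longrightarrow> y \<in> Min \<Longrightarrow> y \<in> W a b \<Longrightarrow> g y \<notin> W a b \<Longrightarrow> y \<notin> W (g a) (g b) \<Longrightarrow> False"
proof -
  assume E: "E a b" and yM: "y \<in> Min" and yj: "y \<in> W a b" and gyj: "g y \<notin> W a b"
    and ygj: "y \<notin> W (g a) (g b)"
  define w where "w = inv g y"
  define p where "p = inv g w"
  have gw: "g w = y" and gp: "g p = w" unfolding w_def p_def by simp_all
  have wj: "w \<notin> W a b" using ygj Wg2[of w a b] gw by simp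
  have wM: "w \<in> Min" unfolding w_def using min_inv[OF yM] .
  have pj: "p \<in> W a b"
  proof (rule ccontr)
    assume pj: "p \<notin> W a b"
    obtain m where m: "d p m + d m w = d p w" "d w m + d m y = d w y" "d p m + d m y = d p y"
      using median[of p w y] by blast
    have mj: "m \<notin> W a b" using convex_c[OF E pj wj m(1)] .
    have "d (g p) (g m) + d (g m) (g y) = d (g p) (g y)" using m(3) by simp
    then have gmj: "g m \<notin> W a b" using convex_c[OF E wj gyj] gp by simp
    have "d m (g m) + 2 \<le> d m y + d y (g m)" using BT[OF E yj mj gmj] .
    moreover have "d y (g m) = d w m" using dg[of w m] gw by simp
    moreover have "d m y + d w m = d w (g w)" using m(2) d_sym[of w m] gw by simp
    moreover have "d w (g w) \<le> d m (g m)" using minD[OF wM] .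
    ultimately show False by linarith
  qed
  have Eg: "E (g a) (g b)" using gE'[OF E] .
  have gyg: "g y \<in> W (g a) (g b)" using Wg2 yj by blast
  show False
  proof (cases "W a b \<inter> W (g a) (g b) = {}")
    case True
    have "y \<in> W (g (g a)) (g (g b))" using Wg[of y "g a" "g b"] Wg[of "inv g y" a b] pj
      unfolding p_def w_def by simp
    then have "W a b \<inter> W (g (g a)) (g (g b)) \<noteq> {}" using yj by blast
    then show False using ND[OF E yj gyg True] by blast
  next
    case False
    then obtain t where t: "t \<in> W a b" "t \<in> W (g a) (g b)" by blast
    have cover: "\<And>t'. t' \<notin> W a b \<Longrightarrow> t' \<in> W (g a) (g b)"
    proof (rule ccontr)
      fix t' assume "t' \<notin> W a b" "t' \<notin> W (g a) (g b)"
      then show False using NoCross[OF E t(1) t(2) _ _ yj ygj gyj gyg] by blast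
    qed
    have E': "E b a" using symE[OF E] .
    have wj': "w \<in> W b a" using wj Wc[OF E] by blast
    have yg': "y \<in> W (g b) (g a)" using ygj Wc[OF Eg] by blast
    have dis: "W b a \<inter> W (g b) (g a) = {}"
    proof (rule ccontr)
      assume "W b a \<inter> W (g b) (g a) \<noteq> {}"
      then obtain u where "u \<in> W b a" "u \<in> W (g b) (g a)" by blast
      then have "u \<notin> W a b" "u \<notin> W (g a) (g b)" using Wc[OF E] Wc[OF Eg] by blast+
      then show False using cover by blast
    qed
    have "g y \<in> W b a" using gyj Wc[OF E] by blast
    moreover have "g y \<in> W (g (g b)) (g (g a))" using Wg2[of y "g b" "g a"] yg' by simp
    ultimately have "W b a \<inter> W (g (g b)) (g (g a)) \<noteq> {}" by blast
    then show False using ND[OF E' wj' yg' dis] by blast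
  qed
qed

lemma MS: "x \<in> Min \<Longrightarrow> y \<in> Min \<Longrightarrow> E x z \<Longrightarrow> d z y + 1 = d x y \<Longrightarrow> d z (g z) \<le> d x (g x)"
proof -
  assume xM: "x \<in> Min" and yM: "y \<in> Min" and Exz: "E x z" and zy: "d z y + 1 = d x y"
  define l where "l = d x (g x)"
  have Eg: "E (g x) (g z)" using gE'[OF Exz] .
  have dzg: "d z (g z) \<le> d z (g x) + d (g x) (g z)" by (rule d_tri)
  have dxg: "d x (g z) \<le> d x z + d z (g z)" by (rule d_tri)
  have dzg2: "d z (g z) \<le> d z x + d x (g z)" by (rule d_tri)
  have 1: "d (g x) (g z) = 1" "d z x = 1" using dE[OF Eg] dE[OF symE[OF Exz]] .
  show ?thesis
  proof (cases "g x \<in> W z x")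
    case True
    then have "d (g x) z < d (g x) x" unfolding W_def by simp
    then show ?thesis using dzg 1 d_sym[of "g x" z] d_sym[of "g x" x] by linarith
  next
    case gxh: False
    show ?thesis
    proof (cases "x \<in> W (g z) (g x)")
      case True
      then have "d x (g z) < d x (g x)" unfolding W_def by simp
      then show ?thesis using dzg2 1 by linarith
    next
      case xgh: False
      have a1: "d (g x) z = l + 1"
        using bip[OF Exz, of "g x"] gxh unfolding W_def l_def using d_sym[of "g x" x] by auto
      have a2: "d x (g z) = l + 1"
        using bip[OF Eg, of x] xgh unfolding W_def l_def by auto
      have "d z (g z) = d z (g x) + 1 \<or> d z (g x) = d z (g z) + 1" using bip[OF Eg, of z] .
      then consider "d z (g z) \<le> l" | "d z (g z) = l + 2" using a1 d_sym[of "g x" z] by linarith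
      then show ?thesis
      proof cases
        case 1 then show ?thesis unfolding l_def .
      next
        case 2
        have Ezx: "E z x" using symE[OF Exz] .
        have xh: "x \<notin> W z x" unfolding W_def using 1 by simp
        have zh: "z \<in> W z x" unfolding W_def using 1 by simp
        have zgh: "z \<notin> W (g z) (g x)" unfolding W_def using 2 a1 d_sym[of "g x" z] by simp
        have gzgh: "g z \<in> W (g z) (g x)" unfolding W_def using 1 d_sym[of "g x" "g z"] by simp
        have gzh: "g z \<notin> W z x" unfolding W_def using 2 a2 d_sym[of "g z" z] d_sym[of "g z" x] by simp
        have yh: "y \<in> W z x" unfolding W_def using zy d_sym[of y z] d_sym[of y x] by simp
        have ygh: "y \<notin> W (g z) (g x)"
        proof
          assume "y \<in> W (g z) (g x)"
          then show False using NoCross[OF Ezx yh _ xh xgh zh zgh gzh gzgh] by blast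
        qed
        have gyh: "g y \<notin> W z x"
        proof
          assume "g y \<in> W z x"
          moreover have "g y \<in> W (g z) (g x)" using Wg2 yh by blast
          ultimately show False using NoCross[OF Ezx _ _ xh xgh zh zgh gzh gzgh] by blast
        qed
        show ?thesis using L1[OF Ezx yM yh gyh ygh] by blast
      qed
    qed
  qed
qed

lemma conv_min: "x \<in> Min \<Longrightarrow> y \<in> Min \<Longrightarrow> d x z + d z y = d x y \<Longrightarrow> z \<in> Min"
proof (induction "d x z" arbitrary: x)
  case 0 then show ?case by simp
next
  case (Suc n)
  obtain x' where x': "E x x'" "d x' z = n" "d x' y + 1 = d x y"
    using conv_step[OF Suc(2)[symmetric] Suc(5)] by blast
  have "d x' (g x') \<le> d x (g x)" using MS[OF Suc(3) Suc(4) x'(1) x'(3)] .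
  then have x'M: "x' \<in> Min" using minI[OF Suc(3)] by blast
  have "d x' z + d z y = d x' y" using x' Suc(2,5) by simp
  then show ?case using Suc(1)[OF x'(2)[symmetric] x'M Suc(4)] by blast
qed

lemma fp_d: "d ((g^^k) x) ((g^^k) y) = d x y" by (induction k) auto
lemma fpi_d: "d ((inv g^^k) x) ((inv g^^k) y) = d x y" by (induction k) auto
lemma fp_comm: "g ((g^^k) x) = (g^^k) (g x)" by (induction k) auto
lemma fpi_comm: "g ((inv g^^k) x) = (inv g^^k) (g x)"
proof (induction k)
  case 0 then show ?case by simp
next
  case (Suc k)
  have "(inv g ^^ Suc k) (g x) = inv g ((inv g ^^ k) (g x))" by simp
  also have "\<dots> = inv g (g ((inv g ^^ k) x))" using Suc.IH by simp
  finally show ?case by simp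
qed
lemma fp_inv1: "(g^^k) ((inv g^^k) x) = x"
proof (induction k arbitrary: x)
  case 0 then show ?case by simp
next
  case (Suc k)
  have "(inv g ^^ Suc k) x = (inv g ^^ k) (inv g x)" by (simp only: funpow_Suc_right comp_apply)
  then show ?case using Suc.IH[of "inv g x"] by simp
qed
lemma fp_inv2: "(inv g^^k) ((g^^k) x) = x"
proof (induction k arbitrary: x)
  case 0 then show ?case by simp
next
  case (Suc k)
  have "(g ^^ Suc k) x = (g ^^ k) (g x)" by (simp only: funpow_Suc_right comp_apply)
  then show ?case using Suc.IH[of "g x"] by simp
qed

lemma zpow_d: "d (zpow g n x) (zpow g n y) = d x y"
  unfolding zpow_def using fp_d fpi_d by auto
lemma zpow_comm: "g (zpow g n x) = zpow g n (g x)"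
  unfolding zpow_def using fp_comm fpi_comm by auto
lemma zpow_inv: "zpow g n (zpow g (-n) x) = x"
  unfolding zpow_def using fp_inv1 fp_inv2 by auto

lemma zpow_min: "x \<in> Min \<Longrightarrow> zpow g n x \<in> Min"
proof -
  assume x: "x \<in> Min"
  have "d (zpow g n x) (g (zpow g n x)) = d x (g x)" using zpow_comm zpow_d by simp
  then show ?thesis using minI[OF x] by simp
qed

lemma zpow_img: "zpow g n ` Min = Min"
proof
  show "zpow g n ` Min \<subseteq> Min" using zpow_min by blast
  show "Min \<subseteq> zpow g n ` Min"
  proof
    fix x assume "x \<in> Min"
    then have "zpow g (-n) x \<in> Min" using zpow_min by blast
    moreover have "x = zpow g n (zpow g (-n) x)" using zpow_inv by simp
    ultimately show "x \<in> zpow g n ` Min" by blast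
  qed
qed

lemma min_ne: "Min \<noteq> {}"
proof -
  obtain x0 :: 'v where "True" by simp
  obtain x where "\<forall>y. d x (g x) \<le> d y (g y)"
    using ex_has_least_nat[of "\<lambda>_. True" x0 "\<lambda>w. d w (g w)"] by blast
  then have "x \<in> Min" unfolding comb_minset_def by blast
  then show ?thesis by blast
qed

end

theorem lemma3p3:
  fixes E :: "'v \<Rightarrow> 'v \<Rightarrow> bool" and g :: "'v \<Rightarrow> 'v"
  assumes "CAT0_cube_complex E"
    and "comb_isometry E g"
    and "free_action E g"
    and "cospecial E g"
  shows "comb_minset E g \<noteq> {}
     \<and> (\<forall>n::int. zpow g n ` comb_minset E g = comb_minset E g)
     \<and> spans_convex_subcomplex E (comb_minset E g)"
proof -
  interpret act E g using assms(1,2,4) by (unfold_locales) auto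
  have "spans_convex_subcomplex E (comb_minset E g)"
    unfolding spans_convex_subcomplex_def using conv_min by blast
  then show ?thesis using min_ne zpow_img by blast
qed

end
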